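(* Consider the MAD-HTLC game described in the context, starting from the initial subgame $G(1,\mathrm{red})$. Suppose $\mathcal{A}$ does not know $pre_a$ and both $\mathcal{A}$ and $\mathcal{B}$ follow the prescribed strategies. Then the miners' best-response strategy leads to $\mathcal{B}$ redeeming both MH-Dep and MH-Col for $v^{\mathrm{dep}}+v^{\mathrm{col}}-f^{\mathrm{dc}}_{\mathcal{B}}$ tokens, and $\mathcal{A}$ gets no tokens.
   Context: Blockchain model: there are $n$ miners; miner $i$ has mining power $\lambda_i>0$ with $\sum_i\lambda_i=1$. The system proceeds in discrete rounds; in each round exactly one miner is chosen at random, miner $i$ with probability $\lambda_i$, and creates a block containing one transaction of her choice, receiving that transaction's fee. There is always an unrelated valid transaction available offering the base fee $f$. Publishing a transaction makes all its contents (in particular any preimages it contains) known to everyone. A contract can be redeemed by at most one confirmed transaction. Parties ($\mathcal{A}$, $\mathcal{B}$, miners) are rational and non-myopic, and their utility is the expected number of tokens they own at the end of the game. MAD-HTLC: $\mathcal{B}$ chose random preimages $pre_a,pre_b$ with digests $dig_a=H(pre_a)$, $dig_b=H(pre_b)$; only $\mathcal{B}$ knows $pre_b$; $\mathcal{A}$ knows $pre_a$ only if $\mathcal{B}$ shared it with her (and otherwise never). Two contracts are initiated in block $b_j$ with timeout $T$: MH-Dep holding $v^{\mathrm{dep}}$ tokens and MH-Col holding $v^{\mathrm{col}}$ tokens. MH-Dep can be redeemed via dep-A (signature of $\mathcal{A}$ and $pre_a$; any block), dep-B (signature of $\mathcal{B}$ and $pre_b$; only in a block at least $T$ blocks after initiation),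 or dep-M (both $pre_a$ and $pre_b$, no signature; any block). MH-Col can be redeemed only in a block at least $T$ blocks after initiation, via col-B (signature of $\mathcal{B}$) or col-M (both $pre_a$ and $pre_b$). The game: $T$ rounds creating blocks $b_{j+1},\dots,b_{j+T}$. Each round $\mathcal{A}$ and $\mathcal{B}$ first alternately publish transactions until neither wishes to publish more; then a randomly chosen miner creates the block. $\mathcal{A}$'s relevant transaction is $tx^{\mathrm{dep}}_{\mathcal{A}}$ (MH-Dep via dep-A, requires $pre_a$, fee $f<f^{\mathrm{dep}}_{\mathcal{A}}<v^{\mathrm{dep}}$). $\mathcal{B}$'s are $tx^{\mathrm{dep}}_{\mathcal{B}}$ (MH-Dep via dep-B, fee $f<f^{\mathrm{dep}}_{\mathcal{B}}<v^{\mathrm{dep}}$), $tx^{\mathrm{col}}_{\mathcal{B}}$ (MH-Col via col-B, fee $f<f^{\mathrm{col}}_{\mathcal{B}}<v^{\mathrm{col}}$) and $tx^{\mathrm{dc}}_{\mathcal{B}}$ (both contracts, fee $f<f^{\mathrm{dc}}_{\mathcal{B}}<v^{\mathrm{dep}}+v^{\mathrm{col}}$). A miner creating a block may include an unrelated transaction (fee $f$), any published transaction valid at that point ($tx^{\mathrm{dep}}_{\mathcal{A}}$ while MH-Dep is unredeemed; $tx^{\mathrm{col}}_{\mathcal{B}}$ only in the last round; $tx^{\mathrm{dep}}_{\mathcal{B}}$, $tx^{\mathrm{dc}}_{\mathcal{B}}$ only in the last round while MH-Dep is unredeemed), or, if both $pre_a$ and $pre_b$ were revealed by published transactions, her own transaction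 redeeming MH-Dep via dep-M (while unredeemed; reward $v^{\mathrm{dep}}$), MH-Col via col-M (last round; reward $v^{\mathrm{col}}$), or both (last round; reward $v^{\mathrm{dep}}+v^{\mathrm{col}}$). Subgame $G(k,s)$, $k\in[1,T]$, $s\in\{\mathrm{red},\mathrm{irred}\}$: the game starting just before round $k$ with MH-Dep redeemable or already redeemed; the full game is $G(1,\mathrm{red})$. Prescribed strategies: if $\mathcal{A}$ knows $pre_a$ she publishes $tx^{\mathrm{dep}}_{\mathcal{A}}$ within the first $T-1$ rounds; otherwise she publishes nothing. $\mathcal{B}$ waits until block $b_{j+T-1}$ is created; if $\mathcal{A}$ has not published $tx^{\mathrm{dep}}_{\mathcal{A}}$ he publishes $tx^{\mathrm{dc}}_{\mathcal{B}}$, otherwise he publishes $tx^{\mathrm{col}}_{\mathcal{B}}$. *)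

theory Defs
  imports Main "HOL.Real"
begin

text \<open>Model of the MAD-HTLC game. Rounds are numbered 1..T (round k creates block b_{j+k}).
  Miners are indexed by 0..<n with mining powers lam i.\<close>

datatype tx = TxDepA | TxDepB | TxColB | TxDC

datatype act =
    Unrel      \<comment> \<open>unrelated transaction, fee f\<close>
  | IncDepA
  | IncDepB
  | IncColB
  | IncDC
  | MDep       \<comment> \<open>own tx redeeming MH-Dep via dep-M\<close>
  | MCol       \<comment> \<open>own tx redeeming MH-Col via col-M\<close>
  | MBoth      \<comment> \<open>own tx redeeming both\<close>

datatype st = Red | Irred   \<comment> \<open>MH-Dep redeemable / already redeemed\<close>

record params =
  fee :: real
  fA :: real
  fdepB :: real
  fcolB :: real
  fdcB :: real
  vdep :: real
  vcol :: real
  T :: nat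

text \<open>P k = set of transactions published (by A and B) before the block of round k is created.\<close>

definition rev_a :: "(nat \<Rightarrow> tx set) \<Rightarrow> nat \<Rightarrow> bool" where
  "rev_a P k \<longleftrightarrow> TxDepA \<in> P k"

definition rev_b :: "(nat \<Rightarrow> tx set) \<Rightarrow> nat \<Rightarrow> bool" where
  "rev_b P k \<longleftrightarrow> TxDepB \<in> P k \<or> TxDC \<in> P k"

definition valid :: "params \<Rightarrow> (nat \<Rightarrow> tx set) \<Rightarrow> nat \<Rightarrow> st \<Rightarrow> act \<Rightarrow> bool" where
  "valid p P k s a = (case a of
      Unrel \<Rightarrow> True
    | IncDepA \<Rightarrow> TxDepA \<in> P k \<and> s = Red
    | IncDepB \<Rightarrow> TxDepB \<in> P k \<and> k = T p \<and> s = Red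
    | IncColB \<Rightarrow> TxColB \<in> P k \<and> k = T p
    | IncDC \<Rightarrow> TxDC \<in> P k \<and> k = T p \<and> s = Red
    | MDep \<Rightarrow> rev_a P k \<and> rev_b P k \<and> s = Red
    | MCol \<Rightarrow> rev_a P k \<and> rev_b P k \<and> k = T p
    | MBoth \<Rightarrow> rev_a P k \<and> rev_b P k \<and> k = T p \<and> s = Red)"

definition reward :: "params \<Rightarrow> act \<Rightarrow> real" where
  "reward p a = (case a of
      Unrel \<Rightarrow> fee p | IncDepA \<Rightarrow> fA p | IncDepB \<Rightarrow> fdepB p | IncColB \<Rightarrow> fcolB p
    | IncDC \<Rightarrow> fdcB p | MDep \<Rightarrow> vdep p | MCol \<Rightarrow> vcol p | MBoth \<Rightarrow> vdep p + vcol p)"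

definition tokA :: "params \<Rightarrow> act \<Rightarrow> real" where
  "tokA p a = (case a of IncDepA \<Rightarrow> vdep p - fA p | _ \<Rightarrow> 0)"

definition tokB :: "params \<Rightarrow> act \<Rightarrow> real" where
  "tokB p a = (case a of
      IncDepB \<Rightarrow> vdep p - fdepB p
    | IncColB \<Rightarrow> vcol p - fcolB p
    | IncDC \<Rightarrow> vdep p + vcol p - fdcB p
    | _ \<Rightarrow> 0)"

definition next_st :: "act \<Rightarrow> st \<Rightarrow> st" where
  "next_st a s = (if a \<in> {IncDepA, IncDepB, IncDC, MDep, MBoth} then Irred else s)"

text \<open>Prescribed strategies of A and B. knowsA: whether A knows pre_a; tA: round (1..T-1)
  before whose block A publishes tx_dep_A if she knows pre_a. B publishes after block
  b_{j+T-1}, i.e. before the block of round T.\<close>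
definition prescribed_pub :: "params \<Rightarrow> bool \<Rightarrow> nat \<Rightarrow> nat \<Rightarrow> tx set" where
  "prescribed_pub p knowsA tA k =
     (if knowsA \<and> tA \<le> k then {TxDepA} else {}) \<union>
     (if k = T p then (if knowsA \<and> tA \<le> T p - 1 then {TxColB} else {TxDC}) else {})"

text \<open>Miner strategy profile: sigma i k s = block content chosen by miner i when she creates
  the block of round k in state s. Expected future reward of miner i in the subgame with
  r remaining rounds (current round T - r + 1... i.e. with Suc r remaining the round is T - r).\<close>
primrec mU :: "params \<Rightarrow> nat \<Rightarrow> (nat \<Rightarrow> real) \<Rightarrow> (nat \<Rightarrow> nat \<Rightarrow> st \<Rightarrow> act)
                 \<Rightarrow> nat \<Rightarrow> nat \<Rightarrow> st \<Rightarrow> real" where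
  "mU p n lam \<sigma> i 0 s = 0"
| "mU p n lam \<sigma> i (Suc r) s =
     (\<Sum>j<n. lam j * ((if j = i then reward p (\<sigma> j (T p - r) s) else 0)
                      + mU p n lam \<sigma> i r (next_st (\<sigma> j (T p - r) s) s)))"

primrec tokE :: "params \<Rightarrow> nat \<Rightarrow> (nat \<Rightarrow> real) \<Rightarrow> (nat \<Rightarrow> nat \<Rightarrow> st \<Rightarrow> act)
                 \<Rightarrow> (act \<Rightarrow> real) \<Rightarrow> nat \<Rightarrow> st \<Rightarrow> real" where
  "tokE p n lam \<sigma> g 0 s = 0"
| "tokE p n lam \<sigma> g (Suc r) s =
     (\<Sum>j<n. lam j * (g (\<sigma> j (T p - r) s) + tokE p n lam \<sigma> g r (next_st (\<sigma> j (T p - r) s) s)))"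

definition miner_SPE :: "params \<Rightarrow> (nat \<Rightarrow> tx set) \<Rightarrow> nat \<Rightarrow> (nat \<Rightarrow> real)
                         \<Rightarrow> (nat \<Rightarrow> nat \<Rightarrow> st \<Rightarrow> act) \<Rightarrow> bool" where
  "miner_SPE p P n lam \<sigma> \<longleftrightarrow>
     (\<forall>k \<in> {1..T p}. \<forall>s. \<forall>i<n.
        valid p P k s (\<sigma> i k s) \<and>
        (\<forall>a. valid p P k s a \<longrightarrow>
           reward p a + mU p n lam \<sigma> i (T p - k) (next_st a s)
             \<le> reward p (\<sigma> i k s) + mU p n lam \<sigma> i (T p - k) (next_st (\<sigma> i k s) s)))"

end

theory Submission
  imports Defs
begin

lemma valid_iff:
  "valid p (prescribed_pub p False tA) k s a \<longleftrightarrow> a = Unrel \<or> (a = IncDC \<and> k = T p \<and> s = Red)"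
  by (cases a) (auto simp: valid_def prescribed_pub_def rev_a_def rev_b_def)

lemma tokE_calc:
  assumes sig: "\<forall>k\<in>{1..<T p}. \<forall>j<n. \<sigma> j k Red = Unrel"
    and sigT: "\<forall>j<n. \<sigma> j (T p) Red = IncDC"
    and g0: "g Unrel = 0"
    and ls: "(\<Sum>i<n. lam i) = 1"
  shows "1 \<le> r \<Longrightarrow> r \<le> T p \<Longrightarrow> tokE p n lam \<sigma> g r Red = g IncDC"
proof (induction r)
  case 0 then show ?case by simp
next
  case (Suc r)
  show ?case
  proof (cases r)
    case 0
    have "tokE p n lam \<sigma> g (Suc r) Red = (\<Sum>j<n. lam j * g IncDC)"
      using sigT 0 by simp
    also have "\<dots> = g IncDC" using ls by (simp add: sum_distrib_right[symmetric])
    finally show ?thesis .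
  next
    case (Suc r')
    have IH: "tokE p n lam \<sigma> g r Red = g IncDC" using Suc.IH Suc.prems Suc by simp
    have "T p - r \<in> {1..<T p}" using Suc.prems Suc by auto
    then have "tokE p n lam \<sigma> g (Suc r) Red = (\<Sum>j<n. lam j * g IncDC)"
      using sig g0 IH by (simp add: next_st_def)
    also have "\<dots> = g IncDC" using ls by (simp add: sum_distrib_right[symmetric])
    finally show ?thesis .
  qed
qed

theorem lemma3:
  fixes p :: params and n :: nat and lam :: "nat \<Rightarrow> real" and tA :: nat
  assumes lam_pos: "\<forall>i<n. lam i > 0"
    and lam_sum: "(\<Sum>i<n. lam i) = 1"
    and T_pos: "T p \<ge> 1"
    and fA: "fee p < fA p" "fA p < vdep p"
    and fdepB: "fee p < fdepB p" "fdepB p < vdep p"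
    and fcolB: "fee p < fcolB p" "fcolB p < vcol p"
    and fdcB: "fee p < fdcB p" "fdcB p < vdep p + vcol p"
  shows "(\<exists>\<sigma>. miner_SPE p (prescribed_pub p False tA) n lam \<sigma>) \<and>
         (\<forall>\<sigma>. miner_SPE p (prescribed_pub p False tA) n lam \<sigma> \<longrightarrow>
            (\<forall>i<n. \<sigma> i (T p) Red = IncDC) \<and>
            tokE p n lam \<sigma> (tokB p) (T p) Red = vdep p + vcol p - fdcB p \<and>
            tokE p n lam \<sigma> (tokA p) (T p) Red = 0)"
proof
  define \<sigma>0 where "\<sigma>0 = (\<lambda>(i::nat) k s. if k = T p \<and> s = Red then IncDC else Unrel)"
  show "\<exists>\<sigma>. miner_SPE p (prescribed_pub p False tA) n lam \<sigma>"
  proof (intro exI[of _ \<sigma>0])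
    show "miner_SPE p (prescribed_pub p False tA) n lam \<sigma>0"
      unfolding miner_SPE_def valid_iff
      using fdcB by (auto simp: \<sigma>0_def reward_def)
  qed
next
  show "\<forall>\<sigma>. miner_SPE p (prescribed_pub p False tA) n lam \<sigma> \<longrightarrow>
            (\<forall>i<n. \<sigma> i (T p) Red = IncDC) \<and>
            tokE p n lam \<sigma> (tokB p) (T p) Red = vdep p + vcol p - fdcB p \<and>
            tokE p n lam \<sigma> (tokA p) (T p) Red = 0"
  proof (intro allI impI)
    fix \<sigma> assume S: "miner_SPE p (prescribed_pub p False tA) n lam \<sigma>"
    have sig: "\<forall>k\<in>{1..<T p}. \<forall>j<n. \<sigma> j k Red = Unrel"
    proof (intro ballI allI impI)
      fix k j assume k: "k \<in> {1..<T p}" and j: "j < n"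
      then have "k \<in> {1..T p}" by auto
      with S j have "\<sigma> j k Red = Unrel \<or> (\<sigma> j k Red = IncDC \<and> k = T p)"
        unfolding miner_SPE_def valid_iff by blast
      with k show "\<sigma> j k Red = Unrel" by auto
    qed
    have sigT: "\<forall>j<n. \<sigma> j (T p) Red = IncDC"
    proof (intro allI impI)
      fix j assume j: "j < n"
      have Tin: "T p \<in> {1..T p}" using T_pos by simp
      from S Tin j have H: "valid p (prescribed_pub p False tA) (T p) Red (\<sigma> j (T p) Red) \<and>
        (\<forall>a. valid p (prescribed_pub p False tA) (T p) Red a \<longrightarrow>
           reward p a + mU p n lam \<sigma> j (T p - T p) (next_st a Red)
             \<le> reward p (\<sigma> j (T p) Red) + mU p n lam \<sigma> j (T p - T p) (next_st (\<sigma> j (T p) Red) Red))"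
        unfolding miner_SPE_def by blast
      have v: "\<sigma> j (T p) Red = Unrel \<or> \<sigma> j (T p) Red = IncDC"
        using H unfolding valid_iff by auto
      have opt: "reward p IncDC \<le> reward p (\<sigma> j (T p) Red)"
        using H unfolding valid_iff by auto
      show "\<sigma> j (T p) Red = IncDC"
        using v opt fdcB by (auto simp: reward_def)
    qed
    show "(\<forall>i<n. \<sigma> i (T p) Red = IncDC) \<and>
            tokE p n lam \<sigma> (tokB p) (T p) Red = vdep p + vcol p - fdcB p \<and>
            tokE p n lam \<sigma> (tokA p) (T p) Red = 0"
      using sigT tokE_calc[of p n \<sigma> "tokB p" lam "T p"]
        tokE_calc[of p n \<sigma> "tokA p" lam "T p"] sig lam_sum T_pos
      by (simp add: tokA_def tokB_def)
  qed
qed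

end
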